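(* For $\omega=(\omega_1,\omega_2)\in\{0,1\}^2$ and $E\in\mathbb{R}$, let $A^\omega(E)\in\mathrm{Sp}_2(\mathbb{R})$ be the $4\times4$ real matrix defined by ${}^t(u_1(1),u_2(1),u_1'(1),u_2'(1))=A^\omega(E)\,{}^t(u_1(0),u_2(0),u_1'(0),u_2'(0))$ for every solution $u=(u_1,u_2)$ on $[0,1]$ of the system $-u''+\begin{pmatrix}\omega_1&1\\1&\omega_2\end{pmatrix}u=Eu$. Let $\mathcal{O}\subset\mathrm{Sp}_2(\mathbb{R})$ be a neighborhood of the identity as described in the context. Then for every $E\in(2,+\infty)$ and every $\omega\in\{0,1\}^2$ there exists an integer $m_\omega(E)\ge1$ such that $(A^\omega(E))^{m_\omega(E)}\in\mathcal{O}$.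
   Context: $\mathrm{Sp}_2(\mathbb{R})$ denotes the real symplectic group of $4\times 4$ matrices, with Lie algebra $\mathfrak{sp}_2(\mathbb{R})$. $\mathcal{O}$ is a neighborhood of the identity in $\mathrm{Sp}_2(\mathbb{R})$ on which $\log=\exp^{-1}$ is a well-defined diffeomorphism and such that elements $g_1,\dots,g_m\in\mathcal{O}$ generate a dense subgroup of $\mathrm{Sp}_2(\mathbb{R})$ if and only if $\log g_1,\dots,\log g_m$ generate $\mathfrak{sp}_2(\mathbb{R})$ as a Lie algebra (such a neighborhood exists by a theorem of Breuillard and Gelander). *)

theory Defs
  imports "HOL-Analysis.Analysis" "HOL-Library.Numeral_Type"
begin

type_synonym mat4 = "real^4^4"

primrec mpow :: "mat4 \<Rightarrow> nat \<Rightarrow> mat4" where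
  "mpow M 0 = mat 1"
| "mpow M (Suc n) = M ** mpow M n"

definition Jsymp :: mat4 where
  "Jsymp = vector [vector [0,0,1,0], vector [0,0,0,1], vector [-1,0,0,0], vector [0,-1,0,0]]"

definition Sp2 :: "mat4 set" where
  "Sp2 = {M. transpose M ** Jsymp ** M = Jsymp}"

definition sp2 :: "mat4 set" where
  "sp2 = {X. transpose X ** Jsymp + Jsymp ** X = 0}"

definition mexp :: "mat4 \<Rightarrow> mat4" where
  "mexp X = (\<Sum>k. (1 / fact k) *\<^sub>R mpow X k)"

inductive_set gen_group :: "mat4 set \<Rightarrow> mat4 set" for G where
  gg_one: "mat 1 \<in> gen_group G"
| gg_gen: "g \<in> G \<Longrightarrow> g \<in> gen_group G"
| gg_inv: "g \<in> G \<Longrightarrow> matrix_inv g \<in> gen_group G"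
| gg_mult: "a \<in> gen_group G \<Longrightarrow> b \<in> gen_group G \<Longrightarrow> a ** b \<in> gen_group G"

inductive_set gen_lie :: "mat4 set \<Rightarrow> mat4 set" for S where
  gl_gen: "X \<in> S \<Longrightarrow> X \<in> gen_lie S"
| gl_zero: "0 \<in> gen_lie S"
| gl_add: "X \<in> gen_lie S \<Longrightarrow> Y \<in> gen_lie S \<Longrightarrow> X + Y \<in> gen_lie S"
| gl_scale: "X \<in> gen_lie S \<Longrightarrow> c *\<^sub>R X \<in> gen_lie S"
| gl_bracket: "X \<in> gen_lie S \<Longrightarrow> Y \<in> gen_lie S \<Longrightarrow> X ** Y - Y ** X \<in> gen_lie S"

definition Vpot :: "real \<Rightarrow> real \<Rightarrow> real^2^2" where
  "Vpot w1 w2 = vector [vector [w1, 1], vector [1, w2]]"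

definition is_solution :: "real \<Rightarrow> real \<Rightarrow> real \<Rightarrow> (real \<Rightarrow> real^2) \<Rightarrow> (real \<Rightarrow> real^2) \<Rightarrow> bool" where
  "is_solution w1 w2 E u u' \<longleftrightarrow>
     (\<forall>t\<in>{0..1}. (u has_vector_derivative u' t) (at t within {0..1}) \<and>
                 (u' has_vector_derivative (Vpot w1 w2 *v u t - E *\<^sub>R u t)) (at t within {0..1}))"

definition state :: "real^2 \<Rightarrow> real^2 \<Rightarrow> real^4" where
  "state x y = vector [x$1, x$2, y$1, y$2]"

definition transfer :: "real \<Rightarrow> real \<Rightarrow> real \<Rightarrow> mat4" where
  "transfer w1 w2 E = (THE A. \<forall>u u'. is_solution w1 w2 E u u' \<longrightarrow>
       state (u 1) (u' 1) = A *v state (u 0) (u' 0))"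

end

theory Submission
  imports Defs
begin

lemma vector_4 [simp]:
 "(vector [x1,x2,x3,x4] ::('a::zero)^4)$1 = x1"
 "(vector [x1,x2,x3,x4] ::('a::zero)^4)$2 = x2"
 "(vector [x1,x2,x3,x4] ::('a::zero)^4)$3 = x3"
 "(vector [x1,x2,x3,x4] ::('a::zero)^4)$4 = x4"
  unfolding vector_def by simp_all

lemma J_mult: "Jsymp *v s = vector [s$3, s$4, - s$1, - s$2]"
  by (simp add: vec_eq_iff forall_4 Jsymp_def matrix_vector_mult_def sum_4)

lemma V_mult: "Vpot w1 w2 *v x = vector [w1 * x$1 + x$2, x$1 + w2 * x$2]"
  by (simp add: vec_eq_iff forall_2 Vpot_def matrix_vector_mult_def sum_2)

lemma state_nth [simp]: "state x y $ 1 = x$1" "state x y $ 2 = x$2" "state x y $ 3 = y$1" "state x y $ 4 = y$2"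
  by (simp_all add: state_def)

definition Cf :: "real \<Rightarrow> real \<Rightarrow> real \<Rightarrow> real \<Rightarrow> real" where
  "Cf k th p q = p * cos th + q * sin th / k"
definition Df :: "real \<Rightarrow> real \<Rightarrow> real \<Rightarrow> real \<Rightarrow> real" where
  "Df k th p q = q * cos th - p * k * sin th"

lemma Cf_add: "k \<noteq> 0 \<Longrightarrow> Cf k al (Cf k be p q) (Df k be p q) = Cf k (al + be) p q"
  by (simp add: Cf_def Df_def cos_add sin_add field_simps)
lemma Df_add: "k \<noteq> 0 \<Longrightarrow> Df k al (Cf k be p q) (Df k be p q) = Df k (al + be) p q"
  by (simp add: Cf_def Df_def cos_add sin_add field_simps)
lemma Cf_0 [simp]: "Cf k 0 p q = p" and Df_0 [simp]: "Df k 0 p q = q"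
  by (simp_all add: Cf_def Df_def)
lemma CD_wr: "k \<noteq> 0 \<Longrightarrow> Cf k th p q * Df k th p' q' - Df k th p q * Cf k th p' q' = p * q' - q * p'"
proof -
  assume k: "k \<noteq> 0"
  have s: "sin th * sin th = 1 - cos th * cos th"
    by (metis add_diff_cancel_right' power2_eq_square sin_cos_squared_add)
  show ?thesis
    using k by (simp add: Cf_def Df_def field_simps s)
qed

lemma Cf_deriv: "k \<noteq> 0 \<Longrightarrow> ((\<lambda>t. Cf k (k*t) p q) has_real_derivative Df k (k*t) p q) (at t within S)"
  unfolding Cf_def Df_def
  by (rule derivative_eq_intros refl | simp add: field_simps)+
lemma Df_deriv: "k \<noteq> 0 \<Longrightarrow> ((\<lambda>t. Df k (k*t) p q) has_real_derivative (- (k*k) * Cf k (k*t) p q)) (at t within S)"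
  unfolding Cf_def Df_def
  by (rule derivative_eq_intros refl | simp add: field_simps)+
lemma scalar_unique:
  fixes g h :: "real \<Rightarrow> real"
  assumes k: "k > 0"
    and dg: "\<And>t. t \<in> {0..1} \<Longrightarrow> (g has_real_derivative h t) (at t within {0..1})"
    and dh: "\<And>t. t \<in> {0..1} \<Longrightarrow> (h has_real_derivative (-(k*k) * g t)) (at t within {0..1})"
    and t: "t \<in> {0..1}"
  shows "g t = Cf k (k*t) (g 0) (h 0) \<and> h t = Df k (k*t) (g 0) (h 0)"
proof -
  define e where "e t = k*k*(g t - Cf k (k*t) (g 0) (h 0))^2 + (h t - Df k (k*t) (g 0) (h 0))^2" for t
  have k0: "k \<noteq> 0" using k by simp
  have "(e has_real_derivative 0) (at x within {0..1})" if x: "x \<in> {0..1}" for x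
  proof -
    have "(e has_real_derivative
       k*k*(2 * (g x - Cf k (k*x) (g 0) (h 0)) * (h x - Df k (k*x) (g 0) (h 0)))
       + 2 * (h x - Df k (k*x) (g 0) (h 0)) * (-(k*k) * g x - (- (k*k) * Cf k (k*x) (g 0) (h 0))))
       (at x within {0..1})"
      unfolding e_def
      by (rule derivative_eq_intros dg[OF x] dh[OF x] Cf_deriv[OF k0] Df_deriv[OF k0] refl | simp add: algebra_simps)+
    moreover have "k*k*(2 * (g x - Cf k (k*x) (g 0) (h 0)) * (h x - Df k (k*x) (g 0) (h 0)))
       + 2 * (h x - Df k (k*x) (g 0) (h 0)) * (-(k*k) * g x - (- (k*k) * Cf k (k*x) (g 0) (h 0))) = 0"
      by (simp add: algebra_simps)
    ultimately show ?thesis by simp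
  qed
  then obtain c where c: "\<And>x. x \<in> {0..1} \<Longrightarrow> e x = c"
    using has_field_derivative_zero_constant[of "{0..1::real}" e] by auto
  have "e 0 = 0" by (simp add: e_def)
  then have "e t = 0" using c[OF t] c[of 0] by simp
  then have "k*k*(g t - Cf k (k*t) (g 0) (h 0))^2 = 0 \<and> (h t - Df k (k*t) (g 0) (h 0))^2 = 0"
    unfolding e_def using k
    by (smt (verit, best) mult_nonneg_nonneg zero_le_power2)
  then show ?thesis using k0 by simp
qed

lemma vec2_deriv:
  assumes "(f has_real_derivative f') (at x within S)" "(g has_real_derivative g') (at x within S)"
  shows "((\<lambda>t. vector [f t, g t] :: real^2) has_vector_derivative vector [f', g']) (at x within S)"
proof -
  have e: "(\<lambda>t. vector [f t, g t] :: real^2) = (\<lambda>t. f t *\<^sub>R vector [1,0] + g t *\<^sub>R vector [0,1])"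
    by (auto simp: vec_eq_iff forall_2)
  have e2: "vector [f', g'] = f' *\<^sub>R (vector [1,0] :: real^2) + g' *\<^sub>R vector [0,1]"
    by (auto simp: vec_eq_iff forall_2)
  show ?thesis unfolding e e2
    by (rule derivative_eq_intros assms refl | simp)+
qed

lemma comp_deriv:
  fixes u :: "real \<Rightarrow> real^2"
  assumes "(u has_vector_derivative u') F"
  shows "((\<lambda>t. c1 * u t $ 1 + c2 * u t $ 2) has_real_derivative (c1 * u' $ 1 + c2 * u' $ 2)) F"
proof -
  have bl: "bounded_linear (\<lambda>v::real^2. inner (vector [c1, c2]) v)"
    by (rule bounded_linear_inner_right)
  have i: "\<And>v::real^2. inner (vector [c1, c2]) v = c1 * v $ 1 + c2 * v $ 2"
    by (simp add: inner_vec_def sum_2)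
  show ?thesis
    using bounded_linear.has_vector_derivative[OF bl assms]
    unfolding i has_real_derivative_iff_has_vector_derivative by simp
qed

lemma inner_eqI: "(\<And>y. inner y u = inner y (v::real^'n)) \<Longrightarrow> u = v"
  by (metis inner_diff_right inner_eq_zero_iff right_minus_eq)

lemma Sp2I:
  assumes "\<And>s t. inner (M *v s) (Jsymp *v (M *v t)) = inner s (Jsymp *v t)"
  shows "M \<in> Sp2"
proof -
  have "(transpose M ** Jsymp ** M) *v x = Jsymp *v x" for x
  proof (rule inner_eqI)
    fix y
    have "inner y ((transpose M ** Jsymp ** M) *v x) = inner y (transpose M *v (Jsymp *v (M *v x)))"
      by (simp add: matrix_vector_mul_assoc matrix_mul_assoc)
    also have "\<dots> = inner (M *v y) (Jsymp *v (M *v x))"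
      by (metis dot_lmul_matrix inner_commute vector_transpose_matrix)
    also have "\<dots> = inner y (Jsymp *v x)" by (rule assms)
    finally show "inner y ((transpose M ** Jsymp ** M) *v x) = inner y (Jsymp *v x)" .
  qed
  then show ?thesis unfolding Sp2_def by (simp add: matrix_eq)
qed

lemma approx_seq:
  fixes k :: real
  assumes k: "k > 0"
    and Q: "\<And>N. \<bar>of_int (Q N) * (k / (2*pi)) - of_int (P N)\<bar> < 1 / real (Suc N)"
  shows "(\<lambda>N. cos (of_int (Q N) * k)) \<longlonglongrightarrow> cos 0 \<and> (\<lambda>N. sin (of_int (Q N) * k)) \<longlonglongrightarrow> sin 0"
proof -
  define e where "e N = of_int (Q N) * k - (2*pi) * of_int (P N)" for N
  have nb: "norm (e N) \<le> 2*pi * inverse (real (Suc N))" for N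
  proof -
    have "2*pi*(of_int (Q N) * (k / (2*pi))) = of_int (Q N) * k" by simp
    then have "e N = 2*pi * (of_int (Q N) * (k / (2*pi)) - of_int (P N))"
      unfolding e_def right_diff_distrib by simp
    then have "norm (e N) = 2*pi * \<bar>of_int (Q N) * (k / (2*pi)) - of_int (P N)\<bar>"
      using pi_gt_zero by (simp add: abs_mult)
    also have "\<dots> \<le> 2*pi * inverse (real (Suc N))"
      using Q[of N] pi_gt_zero by (intro mult_left_mono) (simp_all add: inverse_eq_divide)
    finally show ?thesis .
  qed
  have l: "(\<lambda>N. 2*pi * inverse (real (Suc N))) \<longlonglongrightarrow> 0"
    using tendsto_mult_right_zero[OF LIMSEQ_inverse_real_of_nat] by simp
  have e0: "e \<longlonglongrightarrow> 0"
    by (rule Lim_null_comparison[OF always_eventually l]) (use nb in blast)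
  have ce: "cos (of_int (Q N) * k) = cos (e N) \<and> sin (of_int (Q N) * k) = sin (e N)" for N
  proof -
    have "of_int (Q N) * k = e N + (2*pi) * of_int (P N)" by (simp add: e_def)
    then show ?thesis by (simp add: cos_add sin_add)
  qed
  have "(\<lambda>N. cos (e N)) \<longlonglongrightarrow> cos 0" "(\<lambda>N. sin (e N)) \<longlonglongrightarrow> sin 0"
    by (intro tendsto_intros e0)+
  then show ?thesis using ce by simp
qed

locale modes =
  fixes w1 w2 E a :: real
  assumes aeq: "a*a = 1 + a*w2 - a*w1" and apos: "0 < a" and Ea: "w1 + a < E" and Eb: "w2 - a < E"
begin

definition "ka = sqrt (E - w1 - a)"
definition "kb = sqrt (E - w2 + a)"
definition "nn = 1 + a*a"

lemma ka_pos: "ka > 0" using Ea by (simp add: ka_def)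
lemma kb_pos: "kb > 0" using Eb by (simp add: kb_def)
lemma ka_sq: "ka * ka = E - w1 - a" using Ea by (simp add: ka_def)
lemma kb_sq: "kb * kb = E - w2 + a" using Eb by (simp add: kb_def)
lemma nn_pos: "nn > 0" by (simp add: nn_def add_pos_nonneg)
lemma nn_nz: "nn \<noteq> 0" using nn_pos by simp
lemma ka_nz: "ka \<noteq> 0" using ka_pos by simp
lemma kb_nz: "kb \<noteq> 0" using kb_pos by simp

definition Mk :: "real \<Rightarrow> real \<Rightarrow> real \<Rightarrow> real \<Rightarrow> real^4" where
  "Mk ca cb da db = vector [(ca - a*cb)/nn, (a*ca + cb)/nn, (da - a*db)/nn, (a*da + db)/nn]"

definition "pa (s::real^4) = s$1 + a * s$2"
definition "pb (s::real^4) = s$2 - a * s$1"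
definition "qa (s::real^4) = s$3 + a * s$4"
definition "qb (s::real^4) = s$4 - a * s$3"

lemma Mk_coords [simp]:
  "pa (Mk ca cb da db) = ca" "pb (Mk ca cb da db) = cb" "qa (Mk ca cb da db) = da" "qb (Mk ca cb da db) = db"
  using nn_nz by (simp_all add: Mk_def pa_def pb_def qa_def qb_def field_simps) (simp_all add: nn_def algebra_simps)

definition Phi :: "real \<Rightarrow> real \<Rightarrow> real^4 \<Rightarrow> real^4" where
  "Phi al be s = Mk (Cf ka al (pa s) (qa s)) (Cf kb be (pb s) (qb s)) (Df ka al (pa s) (qa s)) (Df kb be (pb s) (qb s))"

lemma Phi_0: "Phi 0 0 s = s"
  using nn_nz by (simp add: Phi_def Mk_def pa_def pb_def qa_def qb_def vec_eq_iff forall_4 nn_def field_simps)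

lemma Phi_comp: "Phi al be (Phi al' be' s) = Phi (al+al') (be+be') s"
  unfolding Phi_def[of al' be'] by (simp add: Phi_def Cf_add Df_add ka_nz kb_nz)

lemma Phi_linear: "linear (Phi al be)"
  using nn_nz ka_nz kb_nz by (intro linearI) (simp_all add: Phi_def Mk_def pa_def pb_def qa_def qb_def vec_eq_iff forall_4 Cf_def Df_def field_simps)

lemma omega_Mk:
  "inner (Mk ca cb da db) (Jsymp *v Mk ca' cb' da' db') = (ca*da' - da*ca' + cb*db' - db*cb')/nn"
  using nn_nz by (simp add: J_mult Mk_def inner_vec_def sum_4 field_simps) (simp add: nn_def algebra_simps)

lemma Phi_omega: "inner (Phi al be s) (Jsymp *v Phi al be t) = inner s (Jsymp *v t)"
proof -
  have "inner (Phi al be s) (Jsymp *v Phi al be t) = inner (Phi 0 0 s) (Jsymp *v Phi 0 0 t)"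
  proof -
    have h1: "Cf ka al (pa s) (qa s) * Df ka al (pa t) (qa t) - Df ka al (pa s) (qa s) * Cf ka al (pa t) (qa t) = pa s * qa t - qa s * pa t"
      by (rule CD_wr[OF ka_nz])
    have h2: "Cf kb be (pb s) (qb s) * Df kb be (pb t) (qb t) - Df kb be (pb s) (qb s) * Cf kb be (pb t) (qb t) = pb s * qb t - qb s * pb t"
      by (rule CD_wr[OF kb_nz])
    have "Cf ka al (pa s) (qa s) * Df ka al (pa t) (qa t) - Df ka al (pa s) (qa s) * Cf ka al (pa t) (qa t)
       + Cf kb be (pb s) (qb s) * Df kb be (pb t) (qb t) - Df kb be (pb s) (qb s) * Cf kb be (pb t) (qb t)
       = pa s * qa t - qa s * pa t + (pb s * qb t - qb s * pb t)" using h1 h2 by linarith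
    then show ?thesis unfolding Phi_def omega_Mk by simp
  qed
  then show ?thesis by (simp add: Phi_0)
qed

lemma matrix_Phi: "matrix (Phi al be) *v s = Phi al be s"
  using Phi_linear by (simp add: matrix_works linear_matrix_vector_mul_eq)

lemma Phi_Sp2: "matrix (Phi al be) \<in> Sp2"
  by (rule Sp2I) (simp add: matrix_Phi Phi_omega)

lemma mpow_Phi: "mpow (matrix (Phi ka kb)) m = matrix (Phi (real m * ka) (real m * kb))"
proof (induction m)
  case 0
  then show ?case by (simp add: matrix_eq matrix_Phi Phi_0)
next
  case (Suc m)
  show ?case
    by (simp add: Suc matrix_eq matrix_Phi Phi_comp matrix_vector_mul_assoc[symmetric] algebra_simps)
qed

lemma Phi_nth:
  "Phi al be s $ 1 = (Cf ka al (pa s) (qa s) - a * Cf kb be (pb s) (qb s))/nn"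
  "Phi al be s $ 2 = (a * Cf ka al (pa s) (qa s) + Cf kb be (pb s) (qb s))/nn"
  "Phi al be s $ 3 = (Df ka al (pa s) (qa s) - a * Df kb be (pb s) (qb s))/nn"
  "Phi al be s $ 4 = (a * Df ka al (pa s) (qa s) + Df kb be (pb s) (qb s))/nn"
  by (simp_all add: Phi_def Mk_def)

definition sol :: "real^4 \<Rightarrow> real \<Rightarrow> real^2" where
  "sol s t = vector [Phi (ka*t) (kb*t) s $ 1, Phi (ka*t) (kb*t) s $ 2]"
definition sol' :: "real^4 \<Rightarrow> real \<Rightarrow> real^2" where
  "sol' s t = vector [Phi (ka*t) (kb*t) s $ 3, Phi (ka*t) (kb*t) s $ 4]"

lemma sol_state0: "state (sol s 0) (sol' s 0) = s"
  by (simp add: state_def sol_def sol'_def Phi_0 vec_eq_iff forall_4)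

lemma sol_state1: "state (sol s 1) (sol' s 1) = Phi ka kb s"
  by (simp add: state_def sol_def sol'_def vec_eq_iff forall_4)

lemma sol_solution: "is_solution w1 w2 E (sol s) (sol' s)"
  unfolding is_solution_def
proof (intro ballI conjI)
  fix t :: real
  show "(sol s has_vector_derivative sol' s t) (at t within {0..1})"
    unfolding sol_def sol'_def Phi_nth
    apply (rule vec2_deriv)
    by (rule derivative_eq_intros Cf_deriv[OF ka_nz] Cf_deriv[OF kb_nz] refl | simp add: nn_nz field_simps)+
  let ?cA = "Cf ka (ka*t) (pa s) (qa s)" and ?cB = "Cf kb (kb*t) (pb s) (qb s)"
  have "(sol' s has_vector_derivative vector [(-(ka*ka) * ?cA + a * (kb*kb) * ?cB)/nn, (-(a*(ka*ka)) * ?cA - (kb*kb) * ?cB)/nn])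
        (at t within {0..1})"
    unfolding sol_def sol'_def Phi_nth
    apply (rule vec2_deriv)
    by (rule derivative_eq_intros Df_deriv[OF ka_nz] Df_deriv[OF kb_nz] refl | simp add: nn_nz field_simps)+
  moreover have "vector [(-(ka*ka) * ?cA + a * (kb*kb) * ?cB)/nn, (-(a*(ka*ka)) * ?cA - (kb*kb) * ?cB)/nn]
     = Vpot w1 w2 *v sol s t - E *\<^sub>R sol s t"
  proof -
    have e1: "-(ka*ka) * ?cA + a * (kb*kb) * ?cB = w1 * (?cA - a * ?cB) + (a * ?cA + ?cB) - E * (?cA - a * ?cB)"
      unfolding ka_sq kb_sq using aeq by algebra
    have e2: "(-(a*(ka*ka)) * ?cA - (kb*kb) * ?cB) = (?cA - a * ?cB) + w2 * (a * ?cA + ?cB) - E * (a * ?cA + ?cB)"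
      unfolding ka_sq kb_sq using aeq by algebra
    show ?thesis
      unfolding e1 e2 V_mult sol_def Phi_nth
      using nn_nz by (simp add: vec_eq_iff forall_2 field_simps)
  qed
  ultimately show "(sol' s has_vector_derivative (Vpot w1 w2 *v sol s t - E *\<^sub>R sol s t)) (at t within {0..1})"
    by simp
qed

lemma sol_unique:
  assumes sol: "is_solution w1 w2 E u u'"
  shows "state (u 1) (u' 1) = Phi ka kb (state (u 0) (u' 0))"
proof -
  have du: "\<And>t. t \<in> {0..1} \<Longrightarrow> (u has_vector_derivative u' t) (at t within {0..1})"
    and du': "\<And>t. t \<in> {0..1} \<Longrightarrow> (u' has_vector_derivative (Vpot w1 w2 *v u t - E *\<^sub>R u t)) (at t within {0..1})"
    using sol unfolding is_solution_def by auto
  define g where "g t = 1 * u t $ 1 + a * u t $ 2" for t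
  define h where "h t = 1 * u' t $ 1 + a * u' t $ 2" for t
  define gb where "gb t = (-a) * u t $ 1 + 1 * u t $ 2" for t
  define hb where "hb t = (-a) * u' t $ 1 + 1 * u' t $ 2" for t
  have 1: "g t = Cf ka (ka*t) (g 0) (h 0) \<and> h t = Df ka (ka*t) (g 0) (h 0)" if t: "t \<in> {0..1}" for t
  proof (rule scalar_unique[OF ka_pos _ _ t])
    fix t :: real assume t: "t \<in> {0..1}"
    show "(g has_real_derivative h t) (at t within {0..1})"
      unfolding g_def h_def by (rule comp_deriv[OF du[OF t]])
    have "(h has_real_derivative (1 * (Vpot w1 w2 *v u t - E *\<^sub>R u t) $ 1 + a * (Vpot w1 w2 *v u t - E *\<^sub>R u t) $ 2)) (at t within {0..1})"
      unfolding h_def by (rule comp_deriv[OF du'[OF t]])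
    moreover have "1 * (Vpot w1 w2 *v u t - E *\<^sub>R u t) $ 1 + a * (Vpot w1 w2 *v u t - E *\<^sub>R u t) $ 2 = -(ka*ka) * g t"
      unfolding V_mult g_def ka_sq using aeq by (simp add: algebra_simps) algebra
    ultimately show "(h has_real_derivative -(ka*ka) * g t) (at t within {0..1})" by simp
  qed
  have 2: "gb t = Cf kb (kb*t) (gb 0) (hb 0) \<and> hb t = Df kb (kb*t) (gb 0) (hb 0)" if t: "t \<in> {0..1}" for t
  proof (rule scalar_unique[OF kb_pos _ _ t])
    fix t :: real assume t: "t \<in> {0..1}"
    show "(gb has_real_derivative hb t) (at t within {0..1})"
      unfolding gb_def hb_def by (rule comp_deriv[OF du[OF t]])
    have "(hb has_real_derivative ((-a) * (Vpot w1 w2 *v u t - E *\<^sub>R u t) $ 1 + 1 * (Vpot w1 w2 *v u t - E *\<^sub>R u t) $ 2)) (at t within {0..1})"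
      unfolding hb_def by (rule comp_deriv[OF du'[OF t]])
    moreover have "(-a) * (Vpot w1 w2 *v u t - E *\<^sub>R u t) $ 1 + 1 * (Vpot w1 w2 *v u t - E *\<^sub>R u t) $ 2 = -(kb*kb) * gb t"
      unfolding V_mult gb_def kb_sq using aeq by (simp add: algebra_simps) algebra
    ultimately show "(hb has_real_derivative -(kb*kb) * gb t) (at t within {0..1})" by simp
  qed
  have t1: "(1::real) \<in> {0..1}" by simp
  have p: "pa (state (u 0) (u' 0)) = g 0" "qa (state (u 0) (u' 0)) = h 0"
    "pb (state (u 0) (u' 0)) = gb 0" "qb (state (u 0) (u' 0)) = hb 0"
    by (simp_all add: pa_def qa_def pb_def qb_def g_def h_def gb_def hb_def)
  have r1: "u 1 $ 1 = (g 1 - a * gb 1)/nn" "u 1 $ 2 = (a * g 1 + gb 1)/nn"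
    "u' 1 $ 1 = (h 1 - a * hb 1)/nn" "u' 1 $ 2 = (a * h 1 + hb 1)/nn"
    using nn_nz by (simp_all add: g_def gb_def h_def hb_def field_simps nn_def)
  show ?thesis
    using 1[OF t1] 2[OF t1]
    by (simp add: vec_eq_iff forall_4 Phi_nth p r1)
qed

lemma transfer_eq: "transfer w1 w2 E = matrix (Phi ka kb)"
  unfolding transfer_def
proof (rule the_equality)
  show "\<forall>u u'. is_solution w1 w2 E u u' \<longrightarrow> state (u 1) (u' 1) = matrix (Phi ka kb) *v state (u 0) (u' 0)"
    by (simp add: matrix_Phi sol_unique)
next
  fix B assume B: "\<forall>u u'. is_solution w1 w2 E u u' \<longrightarrow> state (u 1) (u' 1) = B *v state (u 0) (u' 0)"
  have "B *v s = matrix (Phi ka kb) *v s" for s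
    using B[rule_format, OF sol_solution[of s]] by (simp add: sol_state0 sol_state1 matrix_Phi)
  then show "B = matrix (Phi ka kb)" by (simp add: matrix_eq)
qed

lemma Phi_tendsto:
  assumes "(\<lambda>N. cos (al N)) \<longlonglongrightarrow> cos 0" "(\<lambda>N. sin (al N)) \<longlonglongrightarrow> sin 0"
    "(\<lambda>N. cos (be N)) \<longlonglongrightarrow> cos 0" "(\<lambda>N. sin (be N)) \<longlonglongrightarrow> sin 0"
  shows "(\<lambda>N. Phi (al N) (be N) s $ i) \<longlonglongrightarrow> s $ i"
proof -
  have "(\<lambda>N. Phi (al N) (be N) s $ i) \<longlonglongrightarrow> Phi 0 0 s $ i"
  proof -
    have "(\<lambda>N. Phi (al N) (be N) s $ 1) \<longlonglongrightarrow> Phi 0 0 s $ 1"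
         "(\<lambda>N. Phi (al N) (be N) s $ 2) \<longlonglongrightarrow> Phi 0 0 s $ 2"
         "(\<lambda>N. Phi (al N) (be N) s $ 3) \<longlonglongrightarrow> Phi 0 0 s $ 3"
         "(\<lambda>N. Phi (al N) (be N) s $ 4) \<longlonglongrightarrow> Phi 0 0 s $ 4"
      unfolding Phi_nth Cf_def Df_def
      by (intro assms tendsto_divide tendsto_diff tendsto_add tendsto_mult tendsto_const nn_nz ka_nz kb_nz)+
    then show ?thesis using exhaust_4[of i] by auto
  qed
  then show ?thesis by (simp add: Phi_0)
qed


lemma exists_power:
  assumes S: "open S" "mat 1 \<in> S"
  shows "\<exists>m::nat. m \<ge> 1 \<and> mpow (transfer w1 w2 E) m \<in> S \<inter> Sp2"
proof -
  define th where "th i = (if i = 0 then ka / (2*pi) else kb / (2*pi))" for i :: nat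
  have "\<forall>N. \<exists>q p. 0 < q \<and> (\<forall>i<2. \<bar>of_int q * th i - of_int (p i)\<bar> < 1 / real (Suc N))"
  proof
    fix N
    obtain q p where "0 < q" "q \<le> int (Suc N ^ 2)" "\<And>i. i<2 \<Longrightarrow> \<bar>of_int q * th i - of_int (p i)\<bar> < 1 / real (Suc N)"
      apply (rule Dirichlet_approx_simult[of "Suc N" 2 th])
       apply simp
      apply blast
      done
    then show "\<exists>q p. 0 < q \<and> (\<forall>i<2. \<bar>of_int q * th i - of_int (p i)\<bar> < 1 / real (Suc N))" by blast
  qed
  then obtain Q P where QP: "\<And>N. 0 < Q N" "\<And>N i. i < 2 \<Longrightarrow> \<bar>of_int (Q N) * th i - of_int (P N i)\<bar> < 1 / real (Suc N)"
    by metis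
  have A: "\<And>N. \<bar>of_int (Q N) * (ka / (2*pi)) - of_int (P N 0)\<bar> < 1 / real (Suc N)"
    using QP(2)[of 0] by (simp add: th_def)
  have B: "\<And>N. \<bar>of_int (Q N) * (kb / (2*pi)) - of_int (P N 1)\<bar> < 1 / real (Suc N)"
    using QP(2)[of 1] by (simp add: th_def)
  define m where "m N = nat (Q N)" for N
  have rm: "real (m N) = of_int (Q N)" for N using QP(1)[of N] by (simp add: m_def)
  define M where "M N = mpow (transfer w1 w2 E) (m N)" for N
  have M: "M N = matrix (Phi (of_int (Q N) * ka) (of_int (Q N) * kb))" for N
    by (simp add: M_def transfer_eq mpow_Phi rm)
  have "M \<longlonglongrightarrow> mat 1"
  proof (rule vec_tendstoI, rule vec_tendstoI)
    fix i j
    have "(\<lambda>N. Phi (of_int (Q N) * ka) (of_int (Q N) * kb) (axis j 1) $ i) \<longlonglongrightarrow> axis j 1 $ i"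
      using approx_seq[OF ka_pos A] approx_seq[OF kb_pos B] by (intro Phi_tendsto) auto
    then show "(\<lambda>N. M N $ i $ j) \<longlonglongrightarrow> mat 1 $ i $ j"
      by (simp add: M matrix_def axis_def mat_def)
  qed
  then have "eventually (\<lambda>N. M N \<in> S) sequentially"
    using S by (rule topological_tendstoD)
  then obtain N where "M N \<in> S" by (auto simp: eventually_sequentially)
  moreover have "M N \<in> Sp2" by (simp add: M Phi_Sp2)
  moreover have "m N \<ge> 1" using QP(1)[of N] by (simp add: m_def)
  ultimately show ?thesis unfolding M_def by blast
qed

end


lemma exists_modes:
  assumes E: "E > 2" and w: "w1 \<in> {0::real,1}" "w2 \<in> {0::real,1}"
  shows "\<exists>a. modes w1 w2 E a"
proof -
  obtain r :: real where s5: "r * r = 5" and s3: "r < 3" and s1: "r > 1"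
  proof
    show "sqrt 5 * sqrt 5 = (5::real)" by simp
    show "sqrt 5 < (3::real)" by (simp add: real_sqrt_less_iff real_less_lsqrt)
    show "sqrt 5 > (1::real)" by simp
  qed
  consider "w1 = w2" | "w1 = 0 \<and> w2 = 1" | "w1 = 1 \<and> w2 = 0" using w by auto
  then show ?thesis
  proof cases
    case 1
    then have "modes w1 w2 E 1" using w E by unfold_locales auto
    then show ?thesis by blast
  next
    case 2
    then have "modes w1 w2 E ((1 + r)/2)" using E s5 s3 s1
      by unfold_locales (auto simp: field_simps)
    then show ?thesis by blast
  next
    case 3
    then have "modes w1 w2 E ((r - 1)/2)" using E s5 s3 s1
      by unfold_locales (auto simp: field_simps)
    then show ?thesis by blast
  qed
qed

theorem proposition1:
  fixes Ob :: "mat4 set" and lg :: "mat4 \<Rightarrow> mat4"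
  assumes O_sub: "Ob \<subseteq> Sp2"
    and O_nbhd: "\<exists>U. openin (top_of_set Sp2) U \<and> mat 1 \<in> U \<and> U \<subseteq> Ob"
    and O_log: "\<exists>W. W \<subseteq> sp2 \<and> homeomorphism W Ob mexp lg
                   \<and> mexp differentiable_on W \<and> lg differentiable_on Ob"
    and O_BG: "\<And>G. finite G \<Longrightarrow> G \<subseteq> Ob \<Longrightarrow>
                 (closure (gen_group G) = Sp2 \<longleftrightarrow> gen_lie (lg ` G) = sp2)"
  shows "\<forall>E::real. E > 2 \<longrightarrow> (\<forall>w1\<in>{0::real,1}. \<forall>w2\<in>{0::real,1}.
           \<exists>m::nat. m \<ge> 1 \<and> mpow (transfer w1 w2 E) m \<in> Ob)"
proof (intro allI impI ballI)
  fix E w1 w2 :: real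
  assume E: "E > 2" and w: "w1 \<in> {0,1}" "w2 \<in> {0,1}"
  obtain a where md: "modes w1 w2 E a" using exists_modes[OF E w] by blast
  obtain U where U: "openin (top_of_set Sp2) U" "mat 1 \<in> U" "U \<subseteq> Ob" using O_nbhd by blast
  obtain T where T: "open T" "U = Sp2 \<inter> T" using U(1) by (auto simp: openin_open)
  have "mat 1 \<in> T" using U(2) T(2) by blast
  then obtain m :: nat where "m \<ge> 1" "mpow (transfer w1 w2 E) m \<in> T \<inter> Sp2"
    using modes.exists_power[OF md T(1)] by blast
  then show "\<exists>m::nat. m \<ge> 1 \<and> mpow (transfer w1 w2 E) m \<in> Ob"
    using T(2) U(3) by blast
qed

end
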